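(* Let $k$ be an algebraically closed field and $\ell\neq\mathrm{char}(k)$ a prime. Then: (a) An element of $\mathrm{Aut}(\mathbb P^1_k)$ is parabolic if and only if it is uniquely $\ell$-divisible. (b) A subgroup of $\mathrm{Aut}(\mathbb P^1_k)$ is the stabiliser of some point $P\in\mathbb P^1(k)$ if and only if it is the normaliser of the centraliser of some parabolic element.
   Context: An automorphism of $\mathbb P^1_k$ is parabolic if it has exactly one fixed point in $\mathbb P^1(k)$. An element $x$ of a group $G$ is uniquely $\ell$-divisible if there is exactly one $y\in G$ with $y^\ell=x$. *)

theory Defs
  imports "HOL-Algebra.Group_Action" "HOL-Computational_Algebra.Polynomial"
begin

definition alg_closed :: "'k::field itself \<Rightarrow> bool" where
  "alg_closed _ \<longleftrightarrow> (\<forall>p :: 'k poly. degree p > 0 \<longrightarrow> (\<exists>x. poly p x = 0))"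

text \<open>A point of P^1(k) is the set of nonzero representatives of a line through the origin.\<close>
definition proj_pt :: "'k::field \<times> 'k \<Rightarrow> ('k \<times> 'k) set" where
  "proj_pt v = {(t * fst v, t * snd v) | t. t \<noteq> 0}"

definition P1 :: "('k::field \<times> 'k) set set" where
  "P1 = {proj_pt v | v. v \<noteq> (0, 0)}"

definition mat_apply :: "'k::field \<times> 'k \<times> 'k \<times> 'k \<Rightarrow> ('k \<times> 'k) set \<Rightarrow> ('k \<times> 'k) set" where
  "mat_apply M p = (case M of (a, b, c, d) \<Rightarrow> {(a * x + b * y, c * x + d * y) | x y. (x, y) \<in> p})"

definition mobius :: "'k::field \<times> 'k \<times> 'k \<times> 'k \<Rightarrow> ('k \<times> 'k) set \<Rightarrow> ('k \<times> 'k) set" where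
  "mobius M = restrict (mat_apply M) P1"

text \<open>Aut(P^1_k) = PGL_2(k), realised faithfully as the group of induced bijections of P^1(k).\<close>
definition Aut_P1 :: "(('k::field \<times> 'k) set \<Rightarrow> ('k \<times> 'k) set) monoid" where
  "Aut_P1 = \<lparr> carrier = {mobius (a, b, c, d) | a b c d. a * d - b * c \<noteq> 0},
             monoid.mult = (\<lambda>f g. restrict (f \<circ> g) P1),
             one = restrict id P1 \<rparr>"

definition fixed_points :: "(('k::field \<times> 'k) set \<Rightarrow> ('k \<times> 'k) set) \<Rightarrow> ('k \<times> 'k) set set" where
  "fixed_points f = {P \<in> P1. f P = P}"

definition parabolic :: "(('k::field \<times> 'k) set \<Rightarrow> ('k \<times> 'k) set) \<Rightarrow> bool" where
  "parabolic f \<longleftrightarrow> f \<in> carrier (Aut_P1 :: (('k \<times> 'k) set \<Rightarrow> ('k \<times> 'k) set) monoid)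
                   \<and> card (fixed_points f) = 1"

definition uniquely_divisible :: "('a, 'b) monoid_scheme \<Rightarrow> nat \<Rightarrow> 'a \<Rightarrow> bool" where
  "uniquely_divisible G l x \<longleftrightarrow> (\<exists>!y. y \<in> carrier G \<and> y [^]\<^bsub>G\<^esub> l = x)"

definition centralizer :: "('a, 'b) monoid_scheme \<Rightarrow> 'a set \<Rightarrow> 'a set" where
  "centralizer G S = {g \<in> carrier G. \<forall>s \<in> S. g \<otimes>\<^bsub>G\<^esub> s = s \<otimes>\<^bsub>G\<^esub> g}"

end

theory Submission imports Defs begin


type_synonym 'k mat = "'k \<times> 'k \<times> 'k \<times> 'k"

fun mmul :: "'k::field mat \<Rightarrow> 'k mat \<Rightarrow> 'k mat" where
  "mmul (a,b,c,d) (e,f,g,h) = (a*e+b*g, a*f+b*h, c*e+d*g, c*f+d*h)"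
fun mdet :: "'k::field mat \<Rightarrow> 'k" where
  "mdet (a,b,c,d) = a*d - b*c"
fun mv :: "'k::field mat \<Rightarrow> 'k \<times> 'k \<Rightarrow> 'k \<times> 'k" where
  "mv (a,b,c,d) (x,y) = (a*x+b*y, c*x+d*y)"
fun adj :: "'k::field mat \<Rightarrow> 'k mat" where
  "adj (a,b,c,d) = (d,-b,-c,a)"
fun msc :: "'k::field \<Rightarrow> 'k mat \<Rightarrow> 'k mat" where
  "msc t (a,b,c,d) = (t*a,t*b,t*c,t*d)"
definition mI :: "'k::field mat" where "mI = (1,0,0,1)"
fun mpow :: "'k::field mat \<Rightarrow> nat \<Rightarrow> 'k mat" where
  "mpow M 0 = mI" | "mpow M (Suc n) = mmul (mpow M n) M"

lemma proj_pt_eq: "proj_pt u = proj_pt (v::'k::field\<times>'k) \<longleftrightarrow> (\<exists>t. t \<noteq> 0 \<and> u = (t * fst v, t * snd v))"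
proof
  assume h: "proj_pt u = proj_pt v"
  have "v \<in> proj_pt v" unfolding proj_pt_def by (cases v) (auto intro: exI[of _ 1])
  with h have "v \<in> proj_pt u" by simp
  then obtain s where s: "s \<noteq> 0" "v = (s * fst u, s * snd u)" unfolding proj_pt_def by auto
  show "\<exists>t. t \<noteq> 0 \<and> u = (t * fst v, t * snd v)"
    using s by (intro exI[of _ "inverse s"]) (cases u, auto simp: field_simps)
next
  assume "\<exists>t. t \<noteq> 0 \<and> u = (t * fst v, t * snd v)"
  then obtain t where t: "t \<noteq> 0" "u = (t * fst v, t * snd v)" by blast
  show "proj_pt u = proj_pt v"
  proof (rule Set.set_eqI)
    fix z
    show "z \<in> proj_pt u \<longleftrightarrow> z \<in> proj_pt v"
    proof
      assume "z \<in> proj_pt u"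
      then obtain s where "s \<noteq> 0" "z = (s*fst u, s * snd u)" unfolding proj_pt_def by auto
      then show "z \<in> proj_pt v" using t unfolding proj_pt_def
        by (auto intro!: exI[of _ "s*t"] simp: algebra_simps)
    next
      assume "z \<in> proj_pt v"
      then obtain s where "s \<noteq> 0" "z = (s*fst v, s * snd v)" unfolding proj_pt_def by auto
      then show "z \<in> proj_pt u" using t unfolding proj_pt_def
        by (auto intro!: exI[of _ "s/t"] simp: algebra_simps)
    qed
  qed
qed

lemma mat_apply_proj: "mat_apply M (proj_pt v) = proj_pt (mv M v)"
proof -
  obtain a b c d where M: "M = (a,b,c,d)" by (cases M) auto
  obtain x y where v: "v = (x,y)" by (cases v) auto
  show ?thesis
  proof (rule Set.set_eqI)
    fix z
    show "z \<in> mat_apply M (proj_pt v) \<longleftrightarrow> z \<in> proj_pt (mv M v)"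
    proof
      assume "z \<in> mat_apply M (proj_pt v)"
      then obtain t where "t \<noteq> 0" "z = (a*(t*x)+b*(t*y), c*(t*x)+d*(t*y))"
        unfolding M v mat_apply_def proj_pt_def by auto
      then have "z = (t * fst (mv M v), t * snd (mv M v))" using M v by (simp add: algebra_simps)
      then show "z \<in> proj_pt (mv M v)" unfolding proj_pt_def using \<open>t \<noteq> 0\<close> by blast
    next
      assume "z \<in> proj_pt (mv M v)"
      then obtain t where "t \<noteq> 0" "z = (t*(a*x+b*y), t*(c*x+d*y))"
        unfolding M v proj_pt_def by auto
      then have "(t*x,t*y) \<in> proj_pt v" "z = (a*(t*x)+b*(t*y), c*(t*x)+d*(t*y))"
        unfolding v proj_pt_def by (auto simp: algebra_simps)
      then show "z \<in> mat_apply M (proj_pt v)" unfolding M mat_apply_def by blast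
    qed
  qed
qed

lemma P1_iff: "P \<in> P1 \<longleftrightarrow> (\<exists>v. v \<noteq> (0,0) \<and> P = proj_pt v)"
  unfolding P1_def by auto

lemma proj_in_P1[simp]: "v \<noteq> (0,0) \<Longrightarrow> proj_pt v \<in> P1"
  unfolding P1_def by blast

lemma mv_nonzero: "mdet M \<noteq> 0 \<Longrightarrow> v \<noteq> (0,0) \<Longrightarrow> mv M v \<noteq> (0,0)"
proof -
  assume h: "mdet M \<noteq> 0" "v \<noteq> (0,0)"
  obtain a b c d where M: "M = (a,b,c,d)" by (cases M) auto
  obtain x y where v: "v = (x,y)" by (cases v) auto
  show ?thesis
  proof
    assume "mv M v = (0,0)"
    then have e: "a*x+b*y = 0" "c*x+d*y = 0" using M v by auto
    have "(a*d-b*c)*x = 0" "(a*d-b*c)*y = 0" using e by algebra+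
    then show False using h M v by auto
  qed
qed

lemma mv_mmul: "mv (mmul A B) v = mv A (mv B v)"
  by (cases A, cases B, cases v) (auto simp: algebra_simps)

lemma mdet_mmul: "mdet (mmul A B) = mdet A * mdet B"
  by (cases A, cases B) (auto simp: algebra_simps)

lemma mobius_in_P1: "mdet M \<noteq> 0 \<Longrightarrow> P \<in> P1 \<Longrightarrow> mobius M P \<in> P1"
proof -
  assume M: "mdet M \<noteq> 0" and "P \<in> P1"
  then obtain v where v: "v \<noteq> (0,0)" "P = proj_pt v" by (auto simp: P1_iff)
  then have "mobius M P = proj_pt (mv M v)" unfolding mobius_def using \<open>P \<in> P1\<close> by (simp add: mat_apply_proj)
  then show ?thesis using mv_nonzero[OF M v(1)] by simp
qed

lemma mobius_proj: "v \<noteq> (0,0) \<Longrightarrow> mobius M (proj_pt v) = proj_pt (mv M v)"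
proof -
  assume "v \<noteq> (0,0)"
  then have "proj_pt v \<in> P1" by simp
  then show ?thesis unfolding mobius_def by (simp add: mat_apply_proj)
qed

lemma mobius_eqI: assumes "\<And>v. v \<noteq> (0,0) \<Longrightarrow> mobius A (proj_pt v) = mobius B (proj_pt v)" shows "mobius A = mobius B"
proof -
  have "\<And>P. P \<in> P1 \<Longrightarrow> mobius A P = mobius B P" using assms by (auto simp: P1_iff)
  then show ?thesis unfolding mobius_def by (intro restrict_ext) simp
qed

lemma mobius_comp: "mdet B \<noteq> 0 \<Longrightarrow> restrict (mobius A \<circ> mobius B) P1 = mobius (mmul A B)"
  unfolding mobius_def[of "mmul A B"] apply (rule restrict_ext)
  apply (auto simp: P1_iff mobius_proj mv_mmul mv_nonzero mat_apply_proj) done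
lemma mv_I[simp]: "mv mI v = v" by (cases v) (simp add: mI_def)
lemma mdet_I[simp]: "mdet mI = 1" by (simp add: mI_def)

lemma mobius_I: "mobius mI = restrict id P1"
  unfolding mobius_def apply (rule restrict_ext)
  by (auto simp: P1_iff mat_apply_proj)

lemma carrier_iff: "f \<in> carrier (Aut_P1::(('k::field\<times>'k) set \<Rightarrow> _) monoid) \<longleftrightarrow> (\<exists>M::'k mat. mdet M \<noteq> 0 \<and> f = mobius M)"
  unfolding Aut_P1_def by auto

lemma mult_mob: "mdet B \<noteq> 0 \<Longrightarrow> mobius A \<otimes>\<^bsub>Aut_P1\<^esub> mobius B = mobius (mmul A B)"
  unfolding Aut_P1_def using mobius_comp by simp

lemma one_mob: "\<one>\<^bsub>Aut_P1\<^esub> = mobius mI"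
  unfolding Aut_P1_def by (simp add: mobius_I)

lemma mmul_assoc: "mmul (mmul A B) C = mmul A (mmul B C)"
  by (cases A, cases B, cases C) (auto simp: algebra_simps)
lemma mmul_I[simp]: "mmul mI A = A" "mmul A mI = A"
  by (cases A, simp add: mI_def)+
lemma mmul_adj: "mmul (adj A) A = msc (mdet A) mI" "mmul A (adj A) = msc (mdet A) mI"
  by (cases A, auto simp: mI_def algebra_simps)+
lemma mdet_adj: "mdet (adj A) = mdet A" by (cases A) (auto simp: algebra_simps)

lemma mobius_msc: "t \<noteq> 0 \<Longrightarrow> mobius (msc t A) = mobius A"
  apply (rule mobius_eqI) apply (simp add: mobius_proj)
  apply (subst proj_pt_eq) apply (cases A) by (auto intro!: exI[of _ t] simp: algebra_simps)

lemma group_Aut: "group (Aut_P1::(('k::field\<times>'k) set \<Rightarrow> _) monoid)"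
proof (rule groupI)
  fix x y assume "x \<in> carrier (Aut_P1::(('k\<times>'k) set \<Rightarrow> _) monoid)" "y \<in> carrier (Aut_P1::(('k\<times>'k) set \<Rightarrow> _) monoid)"
  then obtain A B :: "'k mat" where "mdet A \<noteq> 0" "mdet B \<noteq> 0" "x = mobius A" "y = mobius B" by (auto simp: carrier_iff)
  then have "x \<otimes>\<^bsub>Aut_P1\<^esub> y = mobius (mmul A B)" "mdet (mmul A B) \<noteq> 0" by (simp_all add: mult_mob mdet_mmul)
  then show "x \<otimes>\<^bsub>Aut_P1\<^esub> y \<in> carrier (Aut_P1::(('k\<times>'k) set \<Rightarrow> _) monoid)"
    unfolding carrier_iff by blast
next
  show "\<one>\<^bsub>Aut_P1\<^esub> \<in> carrier (Aut_P1::(('k\<times>'k) set \<Rightarrow> _) monoid)"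
    by (simp only: carrier_iff one_mob) (rule exI[of _ mI], simp)
next
  fix x y z assume "x \<in> carrier (Aut_P1::(('k\<times>'k) set \<Rightarrow> _) monoid)" "y \<in> carrier (Aut_P1::(('k\<times>'k) set \<Rightarrow> _) monoid)"
    "z \<in> carrier (Aut_P1::(('k\<times>'k) set \<Rightarrow> _) monoid)"
  then obtain A B C :: "'k mat" where "mdet A \<noteq> 0" "mdet B \<noteq> 0" "mdet C \<noteq> 0" "x = mobius A" "y = mobius B" "z = mobius C" by (auto simp: carrier_iff)
  then show "x \<otimes>\<^bsub>Aut_P1\<^esub> y \<otimes>\<^bsub>Aut_P1\<^esub> z = x \<otimes>\<^bsub>Aut_P1\<^esub> (y \<otimes>\<^bsub>Aut_P1\<^esub> z)"
    by (simp add: mult_mob mdet_mmul mmul_assoc)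
next
  fix x assume "x \<in> carrier (Aut_P1::(('k\<times>'k) set \<Rightarrow> _) monoid)"
  then obtain A :: "'k mat" where "mdet A \<noteq> 0" "x = mobius A" by (auto simp: carrier_iff)
  then show "\<one>\<^bsub>Aut_P1\<^esub> \<otimes>\<^bsub>Aut_P1\<^esub> x = x" by (simp add: one_mob mult_mob)
next
  fix x assume "x \<in> carrier (Aut_P1::(('k\<times>'k) set \<Rightarrow> _) monoid)"
  then obtain A :: "'k mat" where A: "mdet A \<noteq> 0" "x = mobius A" by (auto simp: carrier_iff)
  show "\<exists>y\<in>carrier Aut_P1. y \<otimes>\<^bsub>Aut_P1\<^esub> x = \<one>\<^bsub>Aut_P1\<^esub>"
    apply (rule bexI[of _ "mobius (adj A)"])
     apply (simp add: A mult_mob mmul_adj mobius_msc one_mob)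
    apply (simp only: carrier_iff) by (rule exI[of _ "adj A"], simp add: mdet_adj A)
qed




fun cross :: "'k::field \<times> 'k \<Rightarrow> 'k \<times> 'k \<Rightarrow> 'k" where
  "cross (x1,y1) (x2,y2) = x1*y2 - y1*x2"

lemma ker_line:
  fixes p q r s :: "'k::field"
  assumes "(p,q,r,s) \<noteq> (0,0,0,0)" "mv (p,q,r,s) v = (0,0)" "mv (p,q,r,s) w = (0,0)"
  shows "cross v w = 0"
proof -
  obtain v1 v2 where v: "v = (v1,v2)" by (cases v)
  obtain w1 w2 where w: "w = (w1,w2)" by (cases w)
  have e: "p*v1+q*v2 = 0" "r*v1+s*v2 = 0" "p*w1+q*w2=0" "r*w1+s*w2=0" using assms(2,3) v w by auto
  have "p * (v1*w2 - v2*w1) = 0" "q * (v1*w2 - v2*w1) = 0" "r * (v1*w2 - v2*w1) = 0" "s * (v1*w2 - v2*w1) = 0"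
    using e by algebra+
  then show ?thesis using assms(1) v w by auto
qed

lemma cross_zero:
  fixes v w :: "'k::field \<times> 'k"
  assumes "v \<noteq> (0,0)" "cross v w = 0"
  shows "\<exists>t. w = (t * fst v, t * snd v)"
proof -
  obtain v1 v2 where v: "v = (v1,v2)" by (cases v)
  obtain w1 w2 where w: "w = (w1,w2)" by (cases w)
  have c: "v1*w2 = v2*w1" using assms v w by simp
  show ?thesis
  proof (cases "v1 = 0")
    case True
    then have "v2 \<noteq> 0" using assms v by auto
    then show ?thesis using c True v w by (intro exI[of _ "w2/v2"]) (auto simp: field_simps)
  next
    case False
    then show ?thesis using c v w by (intro exI[of _ "w1/v1"]) (auto simp: field_simps)
  qed
qed

lemma cross_zero_proj:
  fixes v w :: "'k::field \<times> 'k"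
  assumes "v \<noteq> (0,0)" "w \<noteq> (0,0)" "cross v w = 0"
  shows "proj_pt w = proj_pt v"
proof -
  obtain t where t: "w = (t * fst v, t * snd v)" using cross_zero assms by blast
  then have "t \<noteq> 0" using assms(2) by auto
  then show ?thesis using t proj_pt_eq by blast
qed

lemma proj_neq: 
  fixes v w :: "'k::field \<times> 'k"
  assumes "cross v w \<noteq> 0" shows "proj_pt v \<noteq> proj_pt w"
  using assms by (cases v, cases w) (auto simp: proj_pt_eq algebra_simps)

lemma det_zero_of_kernel:
  fixes A :: "'k::field mat"
  assumes "mv A v = (0,0)" "v \<noteq> (0,0)" shows "mdet A = 0"
proof -
  obtain p q r s where A: "A = (p,q,r,s)" by (cases A)
  obtain x y where v: "v = (x,y)" by (cases v)
  have e: "p*x+q*y = 0" "r*x+s*y = 0" using assms A v by auto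
  have "(p*s-q*r)*x = 0" "(p*s-q*r)*y = 0" using e by algebra+
  then show ?thesis using A v assms(2) by auto
qed

lemma kernel_exists:
  fixes p q r s :: "'k::field"
  assumes "p*s - q*r = 0" shows "\<exists>v. v \<noteq> (0,0) \<and> mv (p,q,r,s) v = (0,0)"
proof (cases "(p,q) = (0,0)")
  case True
  show ?thesis
  proof (cases "(r,s) = (0,0)")
    case True
    with \<open>(p,q) = (0,0)\<close> show ?thesis by (intro exI[of _ "(1,0)"]) auto
  next
    case False
    with \<open>(p,q) = (0,0)\<close> show ?thesis by (intro exI[of _ "(s,-r)"]) (auto simp: algebra_simps)
  qed
next
  case False
  then show ?thesis using assms by (intro exI[of _ "(q,-p)"]) (auto simp: algebra_simps)
qed

lemma fixed_iff:
  fixes M :: "'k::field mat"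
  assumes "mdet M \<noteq> 0" "v \<noteq> (0,0)"
  shows "mobius M (proj_pt v) = proj_pt v \<longleftrightarrow> (\<exists>t. mv M v = (t * fst v, t * snd v))"
proof -
  have "mobius M (proj_pt v) = proj_pt (mv M v)" using assms mobius_proj by blast
  moreover have "mv M v \<noteq> (0,0)" using mv_nonzero assms by blast
  ultimately show ?thesis
  proof -
    assume e: "mobius M (proj_pt v) = proj_pt (mv M v)" and nz: "mv M v \<noteq> (0,0)"
    show ?thesis
    proof
      assume "mobius M (proj_pt v) = proj_pt v"
      then show "\<exists>t. mv M v = (t * fst v, t * snd v)" using e proj_pt_eq by metis
    next
      assume "\<exists>t. mv M v = (t * fst v, t * snd v)"
      then obtain t where t: "mv M v = (t * fst v, t * snd v)" by blast
      then have "t \<noteq> 0" using nz by auto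
      then show "mobius M (proj_pt v) = proj_pt v" using e t proj_pt_eq by metis
    qed
  qed
qed

lemma fixed_points_mob:
  fixes M :: "'k::field mat"
  assumes "mdet M \<noteq> 0"
  shows "fixed_points (mobius M) = {proj_pt v | v. v \<noteq> (0,0) \<and> (\<exists>t. mv M v = (t * fst v, t * snd v))}"
proof (rule Set.set_eqI)
  fix P
  show "P \<in> fixed_points (mobius M) \<longleftrightarrow> P \<in> {proj_pt v | v. v \<noteq> (0,0) \<and> (\<exists>t. mv M v = (t * fst v, t * snd v))}"
  proof
    assume "P \<in> fixed_points (mobius M)"
    then obtain v where v: "v \<noteq> (0,0)" "P = proj_pt v" "mobius M P = P" unfolding fixed_points_def P1_iff by blast
    then show "P \<in> {proj_pt v | v. v \<noteq> (0,0) \<and> (\<exists>t. mv M v = (t * fst v, t * snd v))}"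
      using fixed_iff[OF assms v(1)] by blast
  next
    assume "P \<in> {proj_pt v | v. v \<noteq> (0,0) \<and> (\<exists>t. mv M v = (t * fst v, t * snd v))}"
    then obtain v where v: "v \<noteq> (0,0)" "P = proj_pt v" "\<exists>t. mv M v = (t * fst v, t * snd v)" by blast
    then show "P \<in> fixed_points (mobius M)" unfolding fixed_points_def
      using fixed_iff[OF assms v(1)] by simp
  qed
qed

fun mtr :: "'k::field mat \<Rightarrow> 'k" where "mtr (a,b,c,d) = a + d"

lemma eigenvalue_root:
  fixes M :: "'k::field mat"
  assumes "mv M v = (t * fst v, t * snd v)" "v \<noteq> (0,0)" "la + mu = mtr M" "la * mu = mdet M"
  shows "t = la \<or> t = mu"
proof -
  obtain a b c d where M: "M = (a,b,c,d)" by (cases M)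
  have "mv (a-t,b,c,d-t) v = (0,0)" using assms(1) M by (cases v) (auto simp: algebra_simps)
  then have "mdet (a-t,b,c,d-t) = 0" using det_zero_of_kernel assms(2) by blast
  then have "a*d - b*c - (a+d)*t + t*t = 0" by (simp add: algebra_simps)
  moreover have "(t-la)*(t-mu) = t*t - (la+mu)*t + la*mu" by algebra
  moreover have "la + mu = a + d" "la * mu = a*d - b*c" using assms(3,4) M by auto
  ultimately have "(t-la)*(t-mu) = 0" by algebra
  then show ?thesis by auto
qed

lemma eig_exist:
  fixes M :: "'k::field mat"
  assumes "alg_closed TYPE('k)"
  shows "\<exists>la mu. la + mu = mtr M \<and> la * mu = mdet M"
proof -
  let ?p = "[:mdet M, - mtr M, 1:]"
  have "degree ?p > 0" by simp
  then obtain x where "poly ?p x = 0" using assms unfolding alg_closed_def by blast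
  then have "x * (mtr M - x) = mdet M" by (simp add: algebra_simps)
  then show ?thesis by (intro exI[of _ x] exI[of _ "mtr M - x"]) simp
qed

lemma root_exist:
  fixes c :: "'k::field"
  assumes "alg_closed TYPE('k)" "n > 0"
  shows "\<exists>x. x ^ n = c"
proof -
  let ?p = "monom 1 n + [:-c:]"
  have "degree ?p = n" using assms(2) by (subst degree_add_eq_left) (simp_all add: degree_monom_eq)
  then have "degree ?p > 0" using assms(2) by simp
  then obtain x where "poly ?p x = 0" using assms unfolding alg_closed_def by blast
  then show ?thesis by (auto simp: poly_monom)
qed




fun U :: "'k::field \<Rightarrow> 'k \<Rightarrow> 'k \<times> 'k \<Rightarrow> 'k mat" where
  "U x y (v1,v2) = (x + y*v1*v2, -(y*v1^2), y*v2^2, x - y*v1*v2)"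

lemma mv_scale: "mv M (t*x, t*y) = (t * fst (mv M (x,y)), t * snd (mv M (x,y)))"
  by (cases M) (simp add: algebra_simps)

lemma mdet_U: "mdet (U x y v) = x^2"
  by (cases v) (simp add: algebra_simps power2_eq_square)

lemma mv_U: "mv (U x y (v1,v2)) (w1,w2) = (x*w1 + y*(v2*w1 - v1*w2)*v1, x*w2 + y*(v2*w1 - v1*w2)*v2)"
  by (simp add: algebra_simps power2_eq_square)

lemma fixed_U:
  fixes x y :: "'k::field"
  assumes "x \<noteq> 0" "y \<noteq> 0" "v \<noteq> (0,0)"
  shows "fixed_points (mobius (U x y v)) = {proj_pt v}"
proof -
  obtain v1 v2 where v: "v = (v1,v2)" by (cases v)
  have d: "mdet (U x y v) \<noteq> 0" by (simp add: mdet_U assms)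
  have "proj_pt w = proj_pt v" if w: "w \<noteq> (0,0)" "mv (U x y v) w = (t * fst w, t * snd w)" for w t
  proof -
    obtain w1 w2 where ww: "w = (w1,w2)" by (cases w)
    define c where "c = v2*w1 - v1*w2"
    have e: "t*w1 = x*w1 + y*c*v1" "t*w2 = x*w2 + y*c*v2" using w(2) v ww mv_U[of x y v1 v2 w1 w2] c_def by auto
    have "(t-x)*c = 0" unfolding c_def using e c_def by algebra
    have "c = 0"
    proof (rule ccontr)
      assume "c \<noteq> 0"
      then have "t = x" using \<open>(t-x)*c = 0\<close> by simp
      then have "y*c*v1 = 0" "y*c*v2 = 0" using e by auto
      then show False using \<open>c \<noteq> 0\<close> assms v by auto
    qed
    then have "cross v w = 0" using v ww c_def by (simp add: algebra_simps)
    then show ?thesis using cross_zero_proj assms(3) w(1) by blast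
  qed
  moreover have "mv (U x y v) v = (x * fst v, x * snd v)" using v by (simp add: mv_U algebra_simps power2_eq_square)
  ultimately show ?thesis unfolding fixed_points_mob[OF d] using assms(3) by blast
qed

lemma card_ne_1: "a \<in> S \<Longrightarrow> b \<in> S \<Longrightarrow> a \<noteq> b \<Longrightarrow> card S \<noteq> 1"
  by (metis card_1_singletonE singletonD)

lemma parabolic_U:
  fixes x y :: "'k::field"
  assumes "x \<noteq> 0" "y \<noteq> 0" "v \<noteq> (0,0)"
  shows "parabolic (mobius (U x y v))"
proof -
  have "mdet (U x y v) \<noteq> 0" by (simp add: mdet_U assms)
  then have "mobius (U x y v) \<in> carrier (Aut_P1::(('k\<times>'k) set \<Rightarrow> _) monoid)"
    unfolding carrier_iff by blast
  then show ?thesis unfolding parabolic_def using fixed_U[OF assms] by simp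
qed

lemma nil_form:
  fixes p q r v1 v2 :: "'k::field"
  assumes "p*v1 + q*v2 = 0" "r*v1 - p*v2 = 0" "(v1,v2) \<noteq> (0,0)"
  shows "\<exists>s. p = s*v1*v2 \<and> q = -(s*v1^2) \<and> r = s*v2^2"
proof (cases "v1 = 0")
  case True
  then have "v2 \<noteq> 0" using assms by auto
  then have "q = 0" "p = 0" using assms True by auto
  then show ?thesis using True \<open>v2 \<noteq> 0\<close> by (intro exI[of _ "r/v2^2"]) (auto simp: field_simps)
next
  case False
  have r2: "r*v1^2 = -(q*v2^2)" using assms(1,2) by algebra
  have "p = -(q*v2/v1)" using assms(1) False by (simp add: field_simps add_eq_0_iff)
  moreover have "r = -(q*v2^2)/v1^2" using r2 False by (simp add: field_simps)
  ultimately show ?thesis using False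
    by (intro exI[of _ "-(q/v1^2)"]) (auto simp: field_simps power2_eq_square)
qed

lemma fixed_one: "fixed_points (\<one>\<^bsub>Aut_P1\<^esub> :: ('k::field\<times>'k) set \<Rightarrow> _) = P1"
  unfolding fixed_points_def Aut_P1_def by auto

lemma one_not_parabolic: "\<not> parabolic (\<one>\<^bsub>Aut_P1\<^esub> :: ('k::field\<times>'k) set \<Rightarrow> _)"
proof -
  have "proj_pt (1::'k,0) \<noteq> proj_pt (0,1)" by (rule proj_neq) simp
  moreover have "proj_pt (1::'k,0) \<in> P1" "proj_pt (0::'k,1) \<in> P1" by simp_all
  ultimately show ?thesis unfolding parabolic_def fixed_one using card_ne_1 by metis
qed

lemma scalar_one: "(a::'k::field) \<noteq> 0 \<Longrightarrow> mobius (a,0,0,a) = \<one>\<^bsub>Aut_P1\<^esub>"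
proof -
  assume "a \<noteq> 0"
  have "(a,0,0,a) = msc a mI" by (simp add: mI_def)
  then show ?thesis using mobius_msc[OF \<open>a \<noteq> 0\<close>] one_mob by metis
qed

lemma classify:
  fixes M :: "'k::field mat"
  assumes ac: "alg_closed TYPE('k)" and dM: "mdet M \<noteq> 0"
  shows "mobius M = \<one>\<^bsub>Aut_P1\<^esub>
    \<or> (\<exists>la mu v1 v2. la \<noteq> mu \<and> la + mu = mtr M \<and> la * mu = mdet M \<and> v1 \<noteq> (0,0) \<and> v2 \<noteq> (0,0)
          \<and> mv M v1 = (la * fst v1, la * snd v1) \<and> mv M v2 = (mu * fst v2, mu * snd v2)
          \<and> cross v1 v2 \<noteq> 0 \<and> fixed_points (mobius M) = {proj_pt v1, proj_pt v2})
    \<or> (\<exists>x y v. x \<noteq> 0 \<and> y \<noteq> 0 \<and> v \<noteq> (0,0) \<and> M = U x y v)"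
proof -
  obtain a b c d where M: "M = (a,b,c,d)" by (cases M)
  obtain la mu where lm: "la + mu = mtr M" "la * mu = mdet M" using eig_exist[OF ac] by blast
  have lm': "la + mu = a + d" "la * mu = a*d - b*c" using lm M by auto
  have kz: "(a-z)*(d-z) - b*c = 0" if "z = la \<or> z = mu" for z
    using that lm' by (auto; algebra)
  show ?thesis
  proof (cases "la = mu")
    case False
    obtain v1 where v1: "v1 \<noteq> (0,0)" "mv (a-la,b,c,d-la) v1 = (0,0)" using kernel_exists kz by blast
    obtain v2 where v2: "v2 \<noteq> (0,0)" "mv (a-mu,b,c,d-mu) v2 = (0,0)" using kernel_exists kz by blast
    have e1: "mv M v1 = (la * fst v1, la * snd v1)" using v1(2) M by (cases v1) (auto simp: algebra_simps)
    have e2: "mv M v2 = (mu * fst v2, mu * snd v2)" using v2(2) M by (cases v2) (auto simp: algebra_simps)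
    have nz1: "(a-la,b,c,d-la) \<noteq> (0,0,0,0)"
    proof
      assume "(a-la,b,c,d-la) = (0,0,0,0)"
      then have "a = la" "d = la" by auto
      then show False using lm' False by auto
    qed
    have nz2: "(a-mu,b,c,d-mu) \<noteq> (0,0,0,0)"
    proof
      assume "(a-mu,b,c,d-mu) = (0,0,0,0)"
      then have "a = mu" "d = mu" by auto
      then show False using lm' False by auto
    qed
    have cr: "cross v1 v2 \<noteq> 0"
    proof
      assume "cross v1 v2 = 0"
      then obtain t where t: "v2 = (t * fst v1, t * snd v1)" using cross_zero v1(1) by blast
      have "t \<noteq> 0" using t v2(1) by auto
      have "mv M v2 = (t * (la * fst v1), t * (la * snd v1))" using t e1 M by (cases v1) (simp add: mv_scale)
      then have "(mu - la) * t * fst v1 = 0" "(mu - la) * t * snd v1 = 0" using e2 t by (auto simp: algebra_simps)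
      then show False using False \<open>t \<noteq> 0\<close> v1(1) by (cases v1) auto
    qed
    have fp: "fixed_points (mobius M) = {proj_pt v1, proj_pt v2}"
    proof -
      have "proj_pt w = proj_pt v1 \<or> proj_pt w = proj_pt v2" if w: "w \<noteq> (0,0)" "mv M w = (t * fst w, t * snd w)" for w t
      proof -
        have "t = la \<or> t = mu" using eigenvalue_root[OF w(2) w(1) lm] .
        then show ?thesis
        proof
          assume "t = la"
          then have "mv (a-la,b,c,d-la) w = (0,0)" using w(2) M by (cases w) (auto simp: algebra_simps)
          then have "cross v1 w = 0" using ker_line[OF nz1 v1(2)] by blast
          then show ?thesis using cross_zero_proj v1(1) w(1) by blast
        next
          assume "t = mu"
          then have "mv (a-mu,b,c,d-mu) w = (0,0)" using w(2) M by (cases w) (auto simp: algebra_simps)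
          then have "cross v2 w = 0" using ker_line[OF nz2 v2(2)] by blast
          then show ?thesis using cross_zero_proj v2(1) w(1) by blast
        qed
      qed
      then show ?thesis unfolding fixed_points_mob[OF dM] using v1(1) v2(1) e1 e2 by blast
    qed
    show ?thesis using False lm v1(1) v2(1) e1 e2 cr fp by blast
  next
    case True
    show ?thesis
    proof (cases "(a-la,b,c,d-la) = (0,0,0,0)")
      case True
      then have "M = (a,0,0,a)" using M by auto
      moreover have "a \<noteq> 0" using dM M True by auto
      ultimately show ?thesis using scalar_one by blast
    next
      case nz: False
      have dl: "d - la = -(a - la)" using lm' True by (simp add: algebra_simps)
      obtain v where v: "v \<noteq> (0,0)" "mv (a-la,b,c,d-la) v = (0,0)" using kernel_exists kz by blast
      obtain v1 v2 where vv: "v = (v1,v2)" by (cases v)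
      have h: "(a-la)*v1 + b*v2 = 0" "c*v1 + (d-la)*v2 = 0" using v(2) vv by auto
      then have "(a-la)*v1 + b*v2 = 0" "c*v1 - (a-la)*v2 = 0" using dl by (auto simp: algebra_simps)
      then obtain s where s: "a - la = s*v1*v2" "b = -(s*v1^2)" "c = s*v2^2" using nil_form v(1) vv by blast
      have "s \<noteq> 0" using nz s dl by auto
      have "la \<noteq> 0" using dM lm True by auto
      have "M = U la s v" using M vv s dl by (simp add: algebra_simps)
      then show ?thesis using \<open>s \<noteq> 0\<close> \<open>la \<noteq> 0\<close> v(1) by blast
    qed
  qed
qed

lemma parabolic_iff:
  assumes ac: "alg_closed TYPE('k::field)"
  shows "parabolic (f :: ('k\<times>'k) set \<Rightarrow> _) \<longleftrightarrow> (\<exists>x y v. x \<noteq> 0 \<and> y \<noteq> 0 \<and> v \<noteq> (0,0) \<and> f = mobius (U x y v))"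
proof
  assume p: "parabolic f"
  then obtain M :: "'k mat" where M: "mdet M \<noteq> 0" "f = mobius M" unfolding parabolic_def carrier_iff by blast
  from classify[OF ac M(1)] show "\<exists>x y v. x \<noteq> 0 \<and> y \<noteq> 0 \<and> v \<noteq> (0,0) \<and> f = mobius (U x y v)"
  proof (elim disjE)
    assume "mobius M = \<one>\<^bsub>Aut_P1\<^esub>"
    then show ?thesis using p M one_not_parabolic by metis
  next
    assume "\<exists>la mu v1 v2. la \<noteq> mu \<and> la + mu = mtr M \<and> la * mu = mdet M \<and> v1 \<noteq> (0,0) \<and> v2 \<noteq> (0,0)
          \<and> mv M v1 = (la * fst v1, la * snd v1) \<and> mv M v2 = (mu * fst v2, mu * snd v2)
          \<and> cross v1 v2 \<noteq> 0 \<and> fixed_points (mobius M) = {proj_pt v1, proj_pt v2}"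
    then obtain v1 v2 :: "'k\<times>'k" where "cross v1 v2 \<noteq> 0" "fixed_points (mobius M) = {proj_pt v1, proj_pt v2}" by blast
    then have "card (fixed_points f) \<noteq> 1" using M proj_neq card_ne_1 by (metis insertI1 insertI2 singletonI)
    then show ?thesis using p unfolding parabolic_def by blast
  next
    assume "\<exists>x y v. x \<noteq> 0 \<and> y \<noteq> 0 \<and> v \<noteq> (0,0) \<and> M = U x y v"
    then show ?thesis using M by blast
  qed
next
  assume "\<exists>x y v. x \<noteq> 0 \<and> y \<noteq> 0 \<and> v \<noteq> (0,0) \<and> f = mobius (U x y v)"
  then show "parabolic f" using parabolic_U by blast
qed




abbreviation GG :: "(('k::field \<times> 'k) set \<Rightarrow> ('k \<times> 'k) set) monoid" where "GG \<equiv> Aut_P1"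

lemma apply_mult: "P \<in> P1 \<Longrightarrow> (g \<otimes>\<^bsub>GG\<^esub> h) P = g (h P)"
  unfolding Aut_P1_def by simp

lemma apply_one: "P \<in> P1 \<Longrightarrow> (\<one>\<^bsub>GG\<^esub>) P = P"
  unfolding Aut_P1_def by simp

lemma carrier_P1: "g \<in> carrier GG \<Longrightarrow> P \<in> P1 \<Longrightarrow> g P \<in> P1"
  unfolding carrier_iff using mobius_in_P1 by blast

lemma apply_inv1: "g \<in> carrier GG \<Longrightarrow> P \<in> P1 \<Longrightarrow> g ((inv\<^bsub>GG\<^esub> g) P) = P"
proof -
  assume g: "g \<in> carrier GG" and P: "P \<in> P1"
  interpret group GG by (rule group_Aut)
  have "(g \<otimes>\<^bsub>GG\<^esub> inv\<^bsub>GG\<^esub> g) P = P" using g P by (simp add: apply_one)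
  then show ?thesis using apply_mult P by metis
qed

lemma apply_inv2: "g \<in> carrier GG \<Longrightarrow> P \<in> P1 \<Longrightarrow> (inv\<^bsub>GG\<^esub> g) (g P) = P"
proof -
  assume g: "g \<in> carrier GG" and P: "P \<in> P1"
  interpret group GG by (rule group_Aut)
  have "(inv\<^bsub>GG\<^esub> g \<otimes>\<^bsub>GG\<^esub> g) P = P" using g P by (simp add: apply_one)
  then show ?thesis using apply_mult P by metis
qed

lemma inv_mob: "mdet M \<noteq> 0 \<Longrightarrow> inv\<^bsub>GG\<^esub> (mobius M) = mobius (adj M)"
proof -
  assume d: "mdet M \<noteq> 0"
  interpret group GG by (rule group_Aut)
  have c1: "mobius M \<in> carrier GG" unfolding carrier_iff using d by blast
  have c2: "mobius (adj M) \<in> carrier GG" unfolding carrier_iff using d mdet_adj by metis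
  have "mobius (adj M) \<otimes>\<^bsub>GG\<^esub> mobius M = \<one>\<^bsub>GG\<^esub>"
    using d by (simp add: mult_mob mmul_adj mobius_msc one_mob)
  then show ?thesis using inv_equality c1 c2 by blast
qed

lemma U_scale: "U x y (t * fst v, t * snd v) = U x (y * t^2) v"
  by (cases v) (simp add: algebra_simps power2_eq_square)

lemma U_comm: "mmul (U x y v) (U x' y' v) = mmul (U x' y' v) (U x y v)"
  by (cases v) (simp add: algebra_simps power2_eq_square)

lemma U_conj: "mmul (mmul A (U x y v)) (adj A) = U (x * mdet A) y (mv A v)"
  by (cases A, cases v) (simp add: algebra_simps power2_eq_square)

lemma parabolic_fixed:
  assumes "parabolic f" shows "\<exists>P. P \<in> P1 \<and> fixed_points f = {P}"
proof -
  have "card (fixed_points f) = 1" using assms unfolding parabolic_def by blast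
  then obtain P where P: "fixed_points f = {P}" by (rule card_1_singletonE)
  then have "P \<in> P1" unfolding fixed_points_def by blast
  then show ?thesis using P by blast
qed

lemma parabolic_carrier: "parabolic f \<Longrightarrow> f \<in> carrier GG"
  unfolding parabolic_def by blast

lemma fixed_pointsI: "P \<in> P1 \<Longrightarrow> f P = P \<Longrightarrow> P \<in> fixed_points f"
  unfolding fixed_points_def by blast

lemma parabolic_form:
  assumes ac: "alg_closed TYPE('k::field)" and p: "parabolic (f :: ('k\<times>'k) set \<Rightarrow> _)" and fp: "fixed_points f = {P}"
  shows "\<exists>x y v. x \<noteq> 0 \<and> y \<noteq> 0 \<and> v \<noteq> (0,0) \<and> f = mobius (U x y v) \<and> P = proj_pt v"
proof -
  obtain x y v where xyv: "x \<noteq> 0" "y \<noteq> 0" "v \<noteq> (0,0)" "f = mobius (U x y v)" using parabolic_iff[OF ac] p by blast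
  then have "fixed_points f = {proj_pt v}" using fixed_U by blast
  then show ?thesis using fp xyv by blast
qed

lemma commute_same_fixed:
  assumes ac: "alg_closed TYPE('k::field)"
    and pf: "parabolic (f :: ('k\<times>'k) set \<Rightarrow> _)" and ff: "fixed_points f = {P}"
    and ph: "parabolic h" and fh: "fixed_points h = {P}"
  shows "f \<otimes>\<^bsub>GG\<^esub> h = h \<otimes>\<^bsub>GG\<^esub> f"
proof -
  obtain x y v where f: "x \<noteq> 0" "y \<noteq> 0" "v \<noteq> (0,0)" "f = mobius (U x y v)" "P = proj_pt v"
    using parabolic_form[OF ac pf ff] by blast
  obtain x' y' w where h: "x' \<noteq> 0" "y' \<noteq> 0" "w \<noteq> (0,0)" "h = mobius (U x' y' w)" "P = proj_pt w"
    using parabolic_form[OF ac ph fh] by blast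
  have "proj_pt w = proj_pt v" using f(5) h(5) by simp
  then obtain t where t: "w = (t * fst v, t * snd v)" using proj_pt_eq by blast
  have h': "h = mobius (U x' (y' * t^2) v)" using h(4) t U_scale[of x' y' t v] by simp
  have d1: "mdet (U x y v) \<noteq> 0" using f by (simp add: mdet_U)
  have d2: "mdet (U x' (y'*t^2) v) \<noteq> 0" using h by (simp add: mdet_U)
  show ?thesis unfolding f(4) h' using d1 d2 by (simp add: mult_mob U_comm)
qed

definition Cent :: "(('k::field \<times> 'k) set \<Rightarrow> ('k \<times> 'k) set) \<Rightarrow> _" where
  "Cent f = centralizer (Aut_P1 :: (('k \<times> 'k) set \<Rightarrow> ('k \<times> 'k) set) monoid) {f}"

lemma cent_char:
  assumes ac: "alg_closed TYPE('k::field)"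
    and pf: "parabolic (f :: ('k\<times>'k) set \<Rightarrow> _)" and ff: "fixed_points f = {P}"
  shows "Cent f = {h \<in> carrier GG. h P = P \<and> (h = \<one>\<^bsub>GG\<^esub> \<or> parabolic h)}"
proof -
  interpret group GG by (rule group_Aut)
  have fc: "f \<in> carrier GG" using pf parabolic_carrier by blast
  have P: "P \<in> P1" "f P = P" using ff unfolding fixed_points_def by auto
  have c1: "h P = P" if h: "h \<in> carrier GG" "h \<otimes>\<^bsub>GG\<^esub> f = f \<otimes>\<^bsub>GG\<^esub> h" for h
  proof -
    have "f (h P) = h (f P)" using h(2) apply_mult P(1) by metis
    then have "f (h P) = h P" using P by simp
    moreover have "h P \<in> P1" using carrier_P1 h(1) P(1) by blast
    ultimately have "h P \<in> fixed_points f" by (rule fixed_pointsI[rotated])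
    then show ?thesis using ff by blast
  qed
  have c2: "parabolic h" if h: "h \<in> carrier GG" "h \<otimes>\<^bsub>GG\<^esub> f = f \<otimes>\<^bsub>GG\<^esub> h" "h \<noteq> \<one>\<^bsub>GG\<^esub>" for h
  proof -
    obtain M :: "'k mat" where M: "mdet M \<noteq> 0" "h = mobius M" using h(1) carrier_iff by blast
    have hP: "h P = P" using c1 h by blast
    from classify[OF ac M(1)] show ?thesis
    proof (elim disjE)
      assume "mobius M = \<one>\<^bsub>GG\<^esub>" then show ?thesis using h M by simp
    next
      assume "\<exists>x y v. x \<noteq> 0 \<and> y \<noteq> 0 \<and> v \<noteq> (0,0) \<and> M = U x y v"
      then show ?thesis using M parabolic_U by blast
    next
      assume "\<exists>la mu v1 v2. la \<noteq> mu \<and> la + mu = mtr M \<and> la * mu = mdet M \<and> v1 \<noteq> (0,0) \<and> v2 \<noteq> (0,0)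
          \<and> mv M v1 = (la * fst v1, la * snd v1) \<and> mv M v2 = (mu * fst v2, mu * snd v2)
          \<and> cross v1 v2 \<noteq> 0 \<and> fixed_points (mobius M) = {proj_pt v1, proj_pt v2}"
      then obtain v1 v2 :: "'k\<times>'k" where vv: "cross v1 v2 \<noteq> 0" "fixed_points h = {proj_pt v1, proj_pt v2}" using M by blast
      have "P \<in> fixed_points h" using hP P(1) by (simp add: fixed_pointsI)
      have ne: "proj_pt v1 \<noteq> proj_pt v2" using proj_neq[OF vv(1)] .
      obtain Q where Q: "Q \<in> fixed_points h" "Q \<noteq> P" "fixed_points h = {P, Q}"
      proof (cases "P = proj_pt v1")
        case True
        then show ?thesis using that[of "proj_pt v2"] vv(2) ne by blast
      next
        case False
        then have "P = proj_pt v2" using \<open>P \<in> fixed_points h\<close> vv(2) by blast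
        then show ?thesis using that[of "proj_pt v1"] vv(2) ne by blast
      qed
      have QP1: "Q \<in> P1" "h Q = Q" using Q(1) unfolding fixed_points_def by auto
      have "h (f Q) = f (h Q)" using h(2) apply_mult QP1(1) by metis
      then have "h (f Q) = f Q" using QP1 by simp
      moreover have "f Q \<in> P1" using carrier_P1 fc QP1(1) by blast
      ultimately have "f Q \<in> fixed_points h" by (rule fixed_pointsI[rotated])
      then have "f Q = P \<or> f Q = Q" using Q(3) by blast
      then show ?thesis
      proof
        assume "f Q = P"
        then have "f Q = f P" using P by simp
        then have "(inv\<^bsub>GG\<^esub> f) (f Q) = (inv\<^bsub>GG\<^esub> f) (f P)" by simp
        then have "Q = P" using apply_inv2 fc QP1(1) P(1) by metis
        then show ?thesis using Q(2) by blast
      next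
        assume "f Q = Q"
        then have "Q \<in> fixed_points f" using QP1(1) by (simp add: fixed_pointsI)
        then show ?thesis using ff Q(2) by blast
      qed
    qed
  qed
  have c3: "h \<otimes>\<^bsub>GG\<^esub> f = f \<otimes>\<^bsub>GG\<^esub> h" if h: "h \<in> carrier GG" "h P = P" "h = \<one>\<^bsub>GG\<^esub> \<or> parabolic h" for h
    using h(3)
  proof
    assume "h = \<one>\<^bsub>GG\<^esub>" then show ?thesis using fc by simp
  next
    assume ph: "parabolic h"
    obtain Q where Q: "Q \<in> P1" "fixed_points h = {Q}" using parabolic_fixed ph by blast
    have "P \<in> fixed_points h" using h(2) P(1) by (simp add: fixed_pointsI)
    then have "fixed_points h = {P}" using Q by simp
    then show ?thesis using commute_same_fixed[OF ac ph _ pf ff] by simp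
  qed
  show ?thesis unfolding Cent_def centralizer_def using c1 c2 c3 by blast
qed




lemma conj_mem: "x \<in> (g <#\<^bsub>G\<^esub> H) #>\<^bsub>G\<^esub> k \<longleftrightarrow> (\<exists>c\<in>H. x = g \<otimes>\<^bsub>G\<^esub> c \<otimes>\<^bsub>G\<^esub> k)"
  unfolding l_coset_def r_coset_def by blast

lemma conj_closed:
  assumes ac: "alg_closed TYPE('k::field)"
    and pf: "parabolic (f :: ('k\<times>'k) set \<Rightarrow> _)" and ff: "fixed_points f = {P}"
    and g: "g \<in> carrier GG" "g P = P" and h: "h \<in> Cent f"
  shows "g \<otimes>\<^bsub>GG\<^esub> h \<otimes>\<^bsub>GG\<^esub> inv\<^bsub>GG\<^esub> g \<in> Cent f"
proof -
  interpret group GG by (rule group_Aut)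
  have P: "P \<in> P1" using ff unfolding fixed_points_def by auto
  have h': "h \<in> carrier GG" "h P = P" "h = \<one>\<^bsub>GG\<^esub> \<or> parabolic h" using h cent_char[OF ac pf ff] by auto
  have ig: "(inv\<^bsub>GG\<^esub> g) P = P" using apply_inv2[OF g(1) P] g(2) by simp
  have cc: "g \<otimes>\<^bsub>GG\<^esub> h \<otimes>\<^bsub>GG\<^esub> inv\<^bsub>GG\<^esub> g \<in> carrier GG" using g h' by simp
  have fx: "(g \<otimes>\<^bsub>GG\<^esub> h \<otimes>\<^bsub>GG\<^esub> inv\<^bsub>GG\<^esub> g) P = P"
    using P ig h'(2) g(2) by (simp add: apply_mult)
  have "g \<otimes>\<^bsub>GG\<^esub> h \<otimes>\<^bsub>GG\<^esub> inv\<^bsub>GG\<^esub> g = \<one>\<^bsub>GG\<^esub> \<or> parabolic (g \<otimes>\<^bsub>GG\<^esub> h \<otimes>\<^bsub>GG\<^esub> inv\<^bsub>GG\<^esub> g)"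
    using h'(3)
  proof
    assume "h = \<one>\<^bsub>GG\<^esub>" then show ?thesis using g by simp
  next
    assume "parabolic h"
    then obtain x y v where xyv: "x \<noteq> 0" "y \<noteq> 0" "v \<noteq> (0,0)" "h = mobius (U x y v)" using parabolic_iff[OF ac] by blast
    obtain A :: "'k mat" where A: "mdet A \<noteq> 0" "g = mobius A" using g(1) carrier_iff by blast
    have dU: "mdet (U x y v) \<noteq> 0" using xyv by (simp add: mdet_U)
    have "g \<otimes>\<^bsub>GG\<^esub> h \<otimes>\<^bsub>GG\<^esub> inv\<^bsub>GG\<^esub> g = mobius (mmul (mmul A (U x y v)) (adj A))"
      using A dU xyv by (simp add: inv_mob mult_mob mdet_adj)
    also have "\<dots> = mobius (U (x * mdet A) y (mv A v))" by (simp add: U_conj)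
    finally show ?thesis using parabolic_U[of "x * mdet A" y "mv A v"] xyv A mv_nonzero[OF A(1) xyv(3)] by simp
  qed
  then show ?thesis using cc fx cent_char[OF ac pf ff] by blast
qed

lemma norm_char:
  assumes ac: "alg_closed TYPE('k::field)"
    and pf: "parabolic (f :: ('k\<times>'k) set \<Rightarrow> _)" and ff: "fixed_points f = {P}"
  shows "normalizer GG (Cent f) = stabilizer GG (\<lambda>g. g) P"
proof -
  interpret group GG by (rule group_Aut)
  have P: "P \<in> P1" "f P = P" using ff unfolding fixed_points_def by auto
  have Csub: "Cent f \<subseteq> carrier GG" unfolding Cent_def centralizer_def by blast
  have fc: "f \<in> carrier GG" using pf parabolic_carrier by blast
  have fC: "f \<in> Cent f" unfolding Cent_def centralizer_def using fc by blast
  have N: "normalizer GG (Cent f) = {g \<in> carrier GG. g <#\<^bsub>GG\<^esub> Cent f #>\<^bsub>GG\<^esub> inv\<^bsub>GG\<^esub> g = Cent f}"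
    unfolding normalizer_def stabilizer_def using Csub by simp
  have S: "stabilizer GG (\<lambda>g. g) P = {g \<in> carrier GG. g P = P}" unfolding stabilizer_def by simp
  have 1: "g P = P" if g: "g \<in> carrier GG" "g <#\<^bsub>GG\<^esub> Cent f #>\<^bsub>GG\<^esub> inv\<^bsub>GG\<^esub> g = Cent f" for g
  proof -
    have "g \<otimes>\<^bsub>GG\<^esub> f \<otimes>\<^bsub>GG\<^esub> inv\<^bsub>GG\<^esub> g \<in> Cent f" using g(2) fC conj_mem by metis
    then have "(g \<otimes>\<^bsub>GG\<^esub> f \<otimes>\<^bsub>GG\<^esub> inv\<^bsub>GG\<^esub> g) P = P" using cent_char[OF ac pf ff] by blast
    have iP: "(inv\<^bsub>GG\<^esub> g) P \<in> P1" using carrier_P1[OF inv_closed[OF g(1)] P(1)] .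
    then have e: "g (f ((inv\<^bsub>GG\<^esub> g) P)) = P" using P \<open>(g \<otimes>\<^bsub>GG\<^esub> f \<otimes>\<^bsub>GG\<^esub> inv\<^bsub>GG\<^esub> g) P = P\<close> by (simp add: apply_mult)
    have "f ((inv\<^bsub>GG\<^esub> g) P) = (inv\<^bsub>GG\<^esub> g) (g (f ((inv\<^bsub>GG\<^esub> g) P)))"
      using apply_inv2[OF g(1)] carrier_P1[OF fc iP] by simp
    then have "f ((inv\<^bsub>GG\<^esub> g) P) = (inv\<^bsub>GG\<^esub> g) P" using e by simp
    then have "(inv\<^bsub>GG\<^esub> g) P \<in> fixed_points f" using iP by (simp add: fixed_pointsI)
    then have "(inv\<^bsub>GG\<^esub> g) P = P" using ff by blast
    then show ?thesis using apply_inv1[OF g(1) P(1)] by simp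
  qed
  have 2: "g <#\<^bsub>GG\<^esub> Cent f #>\<^bsub>GG\<^esub> inv\<^bsub>GG\<^esub> g = Cent f" if g: "g \<in> carrier GG" "g P = P" for g
  proof (rule Set.set_eqI)
    fix x
    show "x \<in> g <#\<^bsub>GG\<^esub> Cent f #>\<^bsub>GG\<^esub> inv\<^bsub>GG\<^esub> g \<longleftrightarrow> x \<in> Cent f"
    proof
      assume "x \<in> g <#\<^bsub>GG\<^esub> Cent f #>\<^bsub>GG\<^esub> inv\<^bsub>GG\<^esub> g"
      then show "x \<in> Cent f" using conj_closed[OF ac pf ff g] conj_mem by metis
    next
      assume x: "x \<in> Cent f"
      have ig: "inv\<^bsub>GG\<^esub> g \<in> carrier GG" "(inv\<^bsub>GG\<^esub> g) P = P" using apply_inv2[OF g(1) P(1)] g by auto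
      have c: "inv\<^bsub>GG\<^esub> g \<otimes>\<^bsub>GG\<^esub> x \<otimes>\<^bsub>GG\<^esub> inv\<^bsub>GG\<^esub> (inv\<^bsub>GG\<^esub> g) \<in> Cent f"
        using conj_closed[OF ac pf ff ig x] .
      have xc: "x \<in> carrier GG" using x Csub by blast
      have "x = g \<otimes>\<^bsub>GG\<^esub> (inv\<^bsub>GG\<^esub> g \<otimes>\<^bsub>GG\<^esub> x \<otimes>\<^bsub>GG\<^esub> inv\<^bsub>GG\<^esub> (inv\<^bsub>GG\<^esub> g)) \<otimes>\<^bsub>GG\<^esub> inv\<^bsub>GG\<^esub> g"
      proof -
        have gi: "inv\<^bsub>GG\<^esub> g \<in> carrier GG" using g(1) by simp
        have "g \<otimes>\<^bsub>GG\<^esub> (inv\<^bsub>GG\<^esub> g \<otimes>\<^bsub>GG\<^esub> x) = (g \<otimes>\<^bsub>GG\<^esub> inv\<^bsub>GG\<^esub> g) \<otimes>\<^bsub>GG\<^esub> x"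
          using g(1) gi xc by (simp only: m_assoc)
        also have "\<dots> = x" using g(1) xc by simp
        finally have e: "g \<otimes>\<^bsub>GG\<^esub> (inv\<^bsub>GG\<^esub> g \<otimes>\<^bsub>GG\<^esub> x) = x" .
        show ?thesis using g(1) gi xc e by (simp add: m_assoc)
      qed
      then show "x \<in> g <#\<^bsub>GG\<^esub> Cent f #>\<^bsub>GG\<^esub> inv\<^bsub>GG\<^esub> g" using c conj_mem by metis
    qed
  qed
  show ?thesis unfolding N S using 1 2 by blast
qed

lemma part_b:
  assumes ac: "alg_closed TYPE('k::field)"
  shows "(\<exists>P \<in> P1. H = stabilizer (Aut_P1 :: (('k \<times> 'k) set \<Rightarrow> ('k \<times> 'k) set) monoid) (\<lambda>g. g) P)
             \<longleftrightarrow> (\<exists>f. parabolic f \<and>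
                   H = normalizer (Aut_P1 :: (('k \<times> 'k) set \<Rightarrow> ('k \<times> 'k) set) monoid)
                         (centralizer (Aut_P1 :: (('k \<times> 'k) set \<Rightarrow> ('k \<times> 'k) set) monoid) {f}))"
proof
  assume "\<exists>P \<in> P1. H = stabilizer (Aut_P1 :: (('k \<times> 'k) set \<Rightarrow> ('k \<times> 'k) set) monoid) (\<lambda>g. g) P"
  then obtain P where P: "P \<in> P1" "H = stabilizer GG (\<lambda>g. g) P" by blast
  obtain v :: "'k \<times> 'k" where v: "v \<noteq> (0,0)" "P = proj_pt v" using P(1) P1_iff by blast
  let ?f = "mobius (U (1::'k) 1 v)"
  have pf: "parabolic ?f" using parabolic_U[of "1::'k" 1 v] v by simp
  have ff: "fixed_points ?f = {P}" using fixed_U[of "1::'k" 1 v] v by simp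
  show "\<exists>f. parabolic f \<and> H = normalizer GG (centralizer GG {f})"
    using norm_char[OF ac pf ff] pf P(2) unfolding Cent_def by metis
next
  assume "\<exists>f. parabolic f \<and> H = normalizer (Aut_P1 :: (('k \<times> 'k) set \<Rightarrow> ('k \<times> 'k) set) monoid)
                         (centralizer (Aut_P1 :: (('k \<times> 'k) set \<Rightarrow> ('k \<times> 'k) set) monoid) {f})"
  then obtain f :: "('k \<times> 'k) set \<Rightarrow> _" where f: "parabolic f" "H = normalizer GG (Cent f)" unfolding Cent_def by blast
  obtain P where P: "P \<in> P1" "fixed_points f = {P}" using parabolic_fixed f(1) by blast
  show "\<exists>P \<in> P1. H = stabilizer GG (\<lambda>g. g) P" using norm_char[OF ac f(1) P(2)] f(2) P(1) by blast
qed




lemma mdet_mpow: "mdet (mpow M n) = mdet M ^ n"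
  by (induction n) (simp_all add: mdet_mmul)

lemma mobius_pow: "mdet M \<noteq> 0 \<Longrightarrow> mobius M [^]\<^bsub>GG\<^esub> n = mobius (mpow M n)"
proof (induction n)
  case 0 then show ?case by (simp add: one_mob)
next
  case (Suc n) then show ?case by (simp add: mult_mob)
qed

lemma mpow_U1: "mpow (U 1 b v) n = U 1 (of_nat n * b) v"
proof (induction n)
  case 0 then show ?case by (cases v) (simp add: mI_def)
next
  case (Suc n) then show ?case by (cases v) (simp add: algebra_simps power2_eq_square)
qed

lemma U_msc: "x \<noteq> 0 \<Longrightarrow> mobius (U x y v) = mobius (U 1 (y/x) v)"
proof -
  assume x: "x \<noteq> 0"
  have "U x y v = msc x (U 1 (y/x) v)" using x by (cases v) (simp add: field_simps)
  then show ?thesis using mobius_msc[OF x] by simp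
qed

lemma mv_msc: "mv (msc t A) w = (t * fst (mv A w), t * snd (mv A w))"
  by (cases A, cases w) (simp add: algebra_simps)

lemma vec_scal_eq: "v \<noteq> (0,0) \<Longrightarrow> (a * fst v, a * snd v) = (b * fst v, b * snd v) \<Longrightarrow> (a::'k::field) = b"
  by (cases v) auto

lemma mobius_inj:
  fixes A B :: "'k::field mat"
  assumes dA: "mdet A \<noteq> 0" and dB: "mdet B \<noteq> 0" and e: "mobius A = mobius B"
  shows "\<exists>t. B = msc t A"
proof -
  obtain a b c d where A: "A = (a,b,c,d)" by (cases A)
  obtain a' b' c' d' where B: "B = (a',b',c',d')" by (cases B)
  have k: "\<exists>t. mv B w = (t * fst (mv A w), t * snd (mv A w))" if "w \<noteq> (0,0)" for w
  proof -
    have "proj_pt (mv A w) = proj_pt (mv B w)" using e mobius_proj[OF that] by metis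
    then show ?thesis using proj_pt_eq by metis
  qed
  obtain t1 where t1: "a' = t1 * a" "c' = t1 * c" using k[of "(1,0)"] A B by auto
  obtain t2 where t2: "b' = t2 * b" "d' = t2 * d" using k[of "(0,1)"] A B by auto
  obtain t3 where t3: "a' + b' = t3 * (a + b)" "c' + d' = t3 * (c + d)" using k[of "(1,1)"] A B by auto
  have h1: "(t1 - t3) * a + (t2 - t3) * b = 0" "(t1 - t3) * c + (t2 - t3) * d = 0"
    using t1 t2 t3 by (simp_all add: algebra_simps)
  have "(a*d - b*c) * (t1 - t3) = 0" "(a*d - b*c) * (t2 - t3) = 0" using h1 by algebra+
  then have "t1 = t3" "t2 = t3" using dA A by auto
  then show ?thesis using A B t1 t2 by (intro exI[of _ t1]) simp
qed

lemma U1_inj: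
  fixes c1 c2 :: "'k::field"
  assumes v: "v \<noteq> (0,0)" and e: "mobius (U 1 c1 v) = mobius (U 1 c2 v)"
  shows "c1 = c2"
proof -
  obtain v1 v2 where vv: "v = (v1,v2)" by (cases v)
  have "mdet (U 1 c1 v) \<noteq> 0" "mdet (U 1 c2 v) \<noteq> 0" by (simp_all add: mdet_U)
  then obtain t where t: "U 1 c2 v = msc t (U 1 c1 v)" using mobius_inj e by blast
  then have h: "1 + c2*v1*v2 = t*(1 + c1*v1*v2)" "c2*v1^2 = t*(c1*v1^2)" "c2*v2^2 = t*(c1*v2^2)"
    using vv by auto
  show ?thesis
  proof (cases "v1 = 0")
    case True
    then have "v2 \<noteq> 0" using v vv by auto
    then show ?thesis using h True by auto
  next
    case False
    then have "c2 = t*c1" using h(2) by auto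
    then have "t = 1" using h(1) by (simp add: algebra_simps)
    then show ?thesis using \<open>c2 = t*c1\<close> by simp
  qed
qed

lemma ofnat_l:
  assumes "prime l" "l \<noteq> CHAR('k::field)"
  shows "(of_nat l :: 'k) \<noteq> 0"
proof
  assume "(of_nat l :: 'k) = 0"
  then have "CHAR('k) dvd l" by (simp add: of_nat_eq_0_iff_char_dvd)
  then have "CHAR('k) = 1 \<or> CHAR('k) = l" using assms(1) prime_nat_iff by blast
  moreover have "CHAR('k) \<noteq> 1" by (metis of_nat_1 of_nat_CHAR one_neq_zero)
  ultimately show False using assms(2) by blast
qed

lemma zeta_exists:
  assumes ac: "alg_closed TYPE('k::field)" and l: "l > 1" and nz: "(of_nat l :: 'k) \<noteq> 0"
  shows "\<exists>z::'k. z ^ l = 1 \<and> z \<noteq> 1"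
proof -
  let ?p = "monom (1::'k) l + [:-1:]"
  have dp: "degree ?p = l" using l by (subst degree_add_eq_left) (simp_all add: degree_monom_eq)
  have "poly ?p 1 = 0" by (simp add: poly_monom)
  then have "[:-1,1:] dvd ?p" using poly_eq_0_iff_dvd by (metis minus_equation_iff)
  then obtain g where g: "?p = [:-1,1:] * g" by (elim dvdE)
  have "?p \<noteq> 0" using dp l by auto
  then have "g \<noteq> 0" using g by auto
  then have "degree ?p = 1 + degree g" using g degree_mult_eq[of "[:-1,1:]" g] by simp
  then have "degree g > 0" using dp l by simp
  then obtain z where z: "poly g z = 0" using ac unfolding alg_closed_def by blast
  have "poly ?p z = 0" using g z by (metis mult_zero_right poly_mult)
  then have zl: "z ^ l = 1" by (simp add: poly_monom)
  have "z \<noteq> 1"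
  proof
    assume "z = 1"
    have "pderiv ?p = [:-1,1:] * pderiv g + g * pderiv [:-1,1:]" using g pderiv_mult by metis
    then have "poly (pderiv ?p) 1 = poly g 1" by (simp add: pderiv_pCons)
    also have "\<dots> = 0" using z \<open>z = 1\<close> by simp
    finally have "poly (pderiv ?p) 1 = 0" .
    moreover have "poly (pderiv ?p) 1 = of_nat l" by (simp add: pderiv_add pderiv_monom poly_monom)
    ultimately show False using nz by simp
  qed
  then show ?thesis using zl by blast
qed

lemma mpow_diag: "mpow (a,0,0,b) n = (a^n,0,0,b^n)"
  by (induction n) (simp_all add: mI_def algebra_simps)

lemma mv_mpow_eigen: "mv Y v = (r*fst v, r*snd v) \<Longrightarrow> mv (mpow Y n) v = (r^n * fst v, r^n * snd v)"
proof (induction n)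
  case 0 then show ?case by simp
next
  case (Suc n)
  have "mv (mpow Y (Suc n)) v = mv (mpow Y n) (r*fst v, r*snd v)" using Suc.prems by (simp add: mv_mmul)
  also have "\<dots> = (r * (r^n * fst v), r * (r^n * snd v))" using Suc by (simp add: mv_scale)
  finally show ?case by (simp add: algebra_simps)
qed

lemma agree:
  fixes A B :: "'k::field mat"
  assumes "cross v1 v2 \<noteq> 0" "mv A v1 = mv B v1" "mv A v2 = mv B v2"
  shows "A = B"
proof (rule ccontr)
  assume ne: "A \<noteq> B"
  obtain a b c d where A: "A = (a,b,c,d)" by (cases A)
  obtain a' b' c' d' where B: "B = (a',b',c',d')" by (cases B)
  have nz: "(a-a',b-b',c-c',d-d') \<noteq> (0,0,0,0)" using ne A B by auto
  have "mv (a-a',b-b',c-c',d-d') v1 = (0,0)" "mv (a-a',b-b',c-c',d-d') v2 = (0,0)"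
    using assms(2,3) A B by (cases v1, cases v2, simp add: algebra_simps)+
  then have "cross v1 v2 = 0" using ker_line[OF nz] by blast
  then show False using assms(1) by simp
qed

fun lincomb :: "'k::field \<Rightarrow> 'k \<Rightarrow> 'k mat \<Rightarrow> 'k mat" where
  "lincomb al be (a,b,c,d) = (al*a+be, al*b, al*c, al*d+be)"

lemma mv_lincomb: assumes "mv M w = (la * fst w, la * snd w)" shows "mv (lincomb al be M) w = ((al*la+be) * fst w, (al*la+be) * snd w)"
proof -
  obtain a b c d where M: "M = (a,b,c,d)" by (cases M)
  obtain x y where w: "w = (x,y)" by (cases w)
  have h: "a*x+b*y = la*x" "c*x+d*y = la*y" using assms M w by auto
  have "(al*a+be)*x + (al*b)*y = al*(a*x+b*y) + be*x" "(al*c)*x + (al*d+be)*y = al*(c*x+d*y) + be*y" by algebra+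
  then show ?thesis using M w h by (simp add: algebra_simps)
qed

lemma eig_root:
  fixes M :: "'k::field mat"
  assumes lm: "la \<noteq> mu" "la * mu = mdet M" "mdet M \<noteq> 0"
    and v: "v1 \<noteq> (0,0)" "v2 \<noteq> (0,0)" "cross v1 v2 \<noteq> 0"
    and e1: "mv M v1 = (la * fst v1, la * snd v1)" and e2: "mv M v2 = (mu * fst v2, mu * snd v2)"
    and r: "r ^ n = la" and q: "q ^ n = mu" and n: "n > 0"
  shows "mpow (lincomb ((r-q)/(la-mu)) ((q*la - r*mu)/(la-mu)) M) n = M
       \<and> mv (lincomb ((r-q)/(la-mu)) ((q*la - r*mu)/(la-mu)) M) v1 = (r * fst v1, r * snd v1)
       \<and> mv (lincomb ((r-q)/(la-mu)) ((q*la - r*mu)/(la-mu)) M) v2 = (q * fst v2, q * snd v2)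
       \<and> mdet (lincomb ((r-q)/(la-mu)) ((q*la - r*mu)/(la-mu)) M) \<noteq> 0"
proof -
  let ?Y = "lincomb ((r-q)/(la-mu)) ((q*la - r*mu)/(la-mu)) M"
  have d: "la - mu \<noteq> 0" using lm by simp
  have c1: "(r-q)/(la-mu)*la + (q*la - r*mu)/(la-mu) = r"
  proof -
    have "(r-q)/(la-mu)*la + (q*la - r*mu)/(la-mu) = ((r-q)*la + (q*la - r*mu))/(la-mu)"
      by (simp add: add_divide_distrib)
    also have "(r-q)*la + (q*la - r*mu) = r*(la-mu)" by algebra
    finally show ?thesis using d by simp
  qed
  have c2: "(r-q)/(la-mu)*mu + (q*la - r*mu)/(la-mu) = q"
  proof -
    have "(r-q)/(la-mu)*mu + (q*la - r*mu)/(la-mu) = ((r-q)*mu + (q*la - r*mu))/(la-mu)"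
      by (simp add: add_divide_distrib)
    also have "(r-q)*mu + (q*la - r*mu) = q*(la-mu)" by algebra
    finally show ?thesis using d by simp
  qed
  have y1: "mv ?Y v1 = (r * fst v1, r * snd v1)" using mv_lincomb[OF e1] c1 by simp
  have y2: "mv ?Y v2 = (q * fst v2, q * snd v2)" using mv_lincomb[OF e2] c2 by simp
  have "mv (mpow ?Y n) v1 = mv M v1" using mv_mpow_eigen[OF y1] e1 r by simp
  moreover have "mv (mpow ?Y n) v2 = mv M v2" using mv_mpow_eigen[OF y2] e2 q by simp
  ultimately have p: "mpow ?Y n = M" using agree v(3) by blast
  then have "mdet ?Y ^ n \<noteq> 0" using mdet_mpow lm(3) by metis
  then have "mdet ?Y \<noteq> 0" using n by auto
  then show ?thesis using p y1 y2 by blast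
qed




lemma part_a_fwd:
  assumes ac: "alg_closed TYPE('k::field)" and nz: "(of_nat l :: 'k) \<noteq> 0"
    and pf: "parabolic (f :: ('k\<times>'k) set \<Rightarrow> _)"
  shows "uniquely_divisible GG l f"
proof -
  interpret group GG by (rule group_Aut)
  obtain x y v where xyv: "x \<noteq> 0" "y \<noteq> 0" "v \<noteq> (0,0)" "f = mobius (U x y v)"
    using parabolic_iff[OF ac] pf by blast
  define P where "P = proj_pt v"
  have ff: "fixed_points f = {P}" using fixed_U xyv P_def by blast
  have f1: "f = mobius (U 1 (y/x) v)" using U_msc xyv by simp
  define c0 where "c0 = y / (of_nat l * x)"
  define r0 where "r0 = mobius (U 1 c0 v)"
  have d0: "mdet (U 1 c0 v) \<noteq> 0" by (simp add: mdet_U)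
  have r0c: "r0 \<in> carrier GG" unfolding r0_def carrier_iff using d0 by blast
  have pw: "mobius (U 1 c v) [^]\<^bsub>GG\<^esub> l = mobius (U 1 (of_nat l * c) v)" for c :: 'k
    using mobius_pow[of "U 1 c v" l] by (simp add: mdet_U mpow_U1)
  have "of_nat l * c0 = y/x" unfolding c0_def using nz xyv by (simp add: field_simps)
  then have r0p: "r0 [^]\<^bsub>GG\<^esub> l = f" unfolding r0_def using pw f1 by simp
  have uniq: "z = r0" if z: "z \<in> carrier GG" "z [^]\<^bsub>GG\<^esub> l = f" for z
  proof -
    have s1: "z [^]\<^bsub>GG\<^esub> Suc l = z [^]\<^bsub>GG\<^esub> l \<otimes>\<^bsub>GG\<^esub> z" by (rule nat_pow_Suc)
    have s2: "z [^]\<^bsub>GG\<^esub> Suc l = z \<otimes>\<^bsub>GG\<^esub> z [^]\<^bsub>GG\<^esub> l" by (rule nat_pow_Suc2[OF z(1)])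
    have "z \<otimes>\<^bsub>GG\<^esub> z [^]\<^bsub>GG\<^esub> l = z [^]\<^bsub>GG\<^esub> l \<otimes>\<^bsub>GG\<^esub> z"
      using s1 s2 by simp
    then have "z \<in> Cent f" unfolding Cent_def centralizer_def using z by simp
    then have zz: "z P = P" "z = \<one>\<^bsub>GG\<^esub> \<or> parabolic z" using cent_char[OF ac pf ff] by auto
    have "parabolic z"
    proof (rule ccontr)
      assume "\<not> parabolic z"
      then have "z = \<one>\<^bsub>GG\<^esub>" using zz by blast
      then have "f = \<one>\<^bsub>GG\<^esub>" using z by simp
      moreover have "\<not> parabolic (\<one>\<^bsub>GG\<^esub> :: ('k\<times>'k) set \<Rightarrow> _)" by (rule one_not_parabolic)
      ultimately show False using pf by simp
    qed
    then obtain Q where Q: "Q \<in> P1" "fixed_points z = {Q}" using parabolic_fixed by blast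
    have "P \<in> fixed_points z" using zz(1) ff unfolding fixed_points_def by auto
    then have fz: "fixed_points z = {P}" using Q by simp
    obtain a b w where abw: "a \<noteq> 0" "b \<noteq> 0" "w \<noteq> (0,0)" "z = mobius (U a b w)" "P = proj_pt w"
      using parabolic_form[OF ac \<open>parabolic z\<close> fz] by blast
    have "proj_pt w = proj_pt v" using abw P_def by simp
    then obtain t where t: "w = (t * fst v, t * snd v)" using proj_pt_eq by blast
    define c where "c = b * t^2 / a"
    have zc: "z = mobius (U 1 c v)" unfolding c_def using abw t U_scale[of a b t v] U_msc[of a "b * t^2" v] by simp
    then have "mobius (U 1 (of_nat l * c) v) = mobius (U 1 (y/x) v)" using z(2) pw f1 by simp
    then have "of_nat l * c = y/x" using U1_inj xyv(3) by blast
    then have "c = c0" unfolding c0_def using nz xyv by (simp add: field_simps)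
    then show ?thesis using zc r0_def by simp
  qed
  show ?thesis unfolding uniquely_divisible_def
    using r0c r0p uniq by blast
qed

lemma not_ud: "y1 \<noteq> y2 \<Longrightarrow> y1 \<in> carrier G \<Longrightarrow> y2 \<in> carrier G \<Longrightarrow> y1 [^]\<^bsub>G\<^esub> l = f \<Longrightarrow> y2 [^]\<^bsub>G\<^esub> l = f
   \<Longrightarrow> \<not> uniquely_divisible G l f"
  unfolding uniquely_divisible_def by blast

lemma part_a_bwd:
  assumes ac: "alg_closed TYPE('k::field)" and l: "prime l" and nz: "(of_nat l :: 'k) \<noteq> 0"
    and fc: "(f :: ('k\<times>'k) set \<Rightarrow> _) \<in> carrier GG" and np: "\<not> parabolic f"
  shows "\<not> uniquely_divisible GG l f"
proof -
  interpret group GG by (rule group_Aut)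
  have l1: "l > 1" using l prime_gt_1_nat by blast
  obtain M :: "'k mat" where M: "mdet M \<noteq> 0" "f = mobius M" using fc carrier_iff by blast
  obtain z :: 'k where z: "z ^ l = 1" "z \<noteq> 1" using zeta_exists[OF ac l1 nz] by blast
  have z0: "z \<noteq> 0" using z l1 by (cases "z = 0") (auto simp: power_0_left)
  from classify[OF ac M(1)] show ?thesis
  proof (elim disjE)
    assume f1: "mobius M = \<one>\<^bsub>GG\<^esub>"
    let ?y2 = "mobius (z,0,0,1)"
    have d2: "mdet (z,0,0,(1::'k)) \<noteq> 0" using z0 by simp
    have c2: "?y2 \<in> carrier GG" unfolding carrier_iff using d2 by blast
    have "?y2 [^]\<^bsub>GG\<^esub> l = mobius (mpow (z,0,0,1) l)" using mobius_pow d2 by blast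
    also have "\<dots> = mobius mI" using z by (simp add: mpow_diag mI_def)
    finally have p2': "?y2 [^]\<^bsub>GG\<^esub> l = mobius mI" .
    have "mobius (mI::'k mat) = \<one>\<^bsub>GG\<^esub>" by (rule one_mob[symmetric])
    then have p2: "?y2 [^]\<^bsub>GG\<^esub> l = f" using M f1 p2' by simp
    have p1: "\<one>\<^bsub>GG\<^esub> [^]\<^bsub>GG\<^esub> l = f" using M f1 by simp
    have "?y2 (proj_pt (1,1)) = proj_pt (z,1)" using mobius_proj[of "(1::'k,1)" "(z,0,0,1)"] by simp
    moreover have "(\<one>\<^bsub>GG\<^esub>) (proj_pt (1::'k,1)) = proj_pt (1,1)" by (rule apply_one) simp
    moreover have "proj_pt (z,1) \<noteq> proj_pt (1::'k,1)" by (rule proj_neq) (use z in simp)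
    ultimately have "\<one>\<^bsub>GG\<^esub> \<noteq> ?y2" by (intro notI) simp
    then show ?thesis using not_ud[OF _ _ c2 p1 p2] by simp
  next
    assume "\<exists>x y v. x \<noteq> 0 \<and> y \<noteq> 0 \<and> v \<noteq> (0,0) \<and> M = U x y v"
    then obtain x y v where "x \<noteq> 0" "y \<noteq> 0" "v \<noteq> (0,0)" "M = U x y v" by blast
    then have "parabolic f" using M(2) parabolic_U by simp
    then show ?thesis using np by simp
  next
    assume "\<exists>la mu v1 v2. la \<noteq> mu \<and> la + mu = mtr M \<and> la * mu = mdet M \<and> v1 \<noteq> (0,0) \<and> v2 \<noteq> (0,0)
          \<and> mv M v1 = (la * fst v1, la * snd v1) \<and> mv M v2 = (mu * fst v2, mu * snd v2)
          \<and> cross v1 v2 \<noteq> 0 \<and> fixed_points (mobius M) = {proj_pt v1, proj_pt v2}"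
    then obtain la where "\<exists>mu v1 v2. la \<noteq> mu \<and> la + mu = mtr M \<and> la * mu = mdet M \<and> v1 \<noteq> (0,0) \<and> v2 \<noteq> (0,0)
          \<and> mv M v1 = (la * fst v1, la * snd v1) \<and> mv M v2 = (mu * fst v2, mu * snd v2)
          \<and> cross v1 v2 \<noteq> 0 \<and> fixed_points (mobius M) = {proj_pt v1, proj_pt v2}" ..
    then obtain mu where "\<exists>v1 v2. la \<noteq> mu \<and> la + mu = mtr M \<and> la * mu = mdet M \<and> v1 \<noteq> (0,0) \<and> v2 \<noteq> (0,0)
          \<and> mv M v1 = (la * fst v1, la * snd v1) \<and> mv M v2 = (mu * fst v2, mu * snd v2)
          \<and> cross v1 v2 \<noteq> 0 \<and> fixed_points (mobius M) = {proj_pt v1, proj_pt v2}" ..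
    then obtain v1 where "\<exists>v2. la \<noteq> mu \<and> la + mu = mtr M \<and> la * mu = mdet M \<and> v1 \<noteq> (0,0) \<and> v2 \<noteq> (0,0)
          \<and> mv M v1 = (la * fst v1, la * snd v1) \<and> mv M v2 = (mu * fst v2, mu * snd v2)
          \<and> cross v1 v2 \<noteq> 0 \<and> fixed_points (mobius M) = {proj_pt v1, proj_pt v2}" ..
    then obtain v2 where Ball: "la \<noteq> mu \<and> la + mu = mtr M \<and> la * mu = mdet M \<and> v1 \<noteq> (0,0) \<and> v2 \<noteq> (0,0)
          \<and> mv M v1 = (la * fst v1, la * snd v1) \<and> mv M v2 = (mu * fst v2, mu * snd v2)
          \<and> cross v1 v2 \<noteq> 0 \<and> fixed_points (mobius M) = {proj_pt v1, proj_pt v2}" ..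
    note B = Ball[THEN conjunct1] Ball[THEN conjunct2, THEN conjunct2, THEN conjunct1] Ball[THEN conjunct2, THEN conjunct2, THEN conjunct2, THEN conjunct1] Ball[THEN conjunct2, THEN conjunct2, THEN conjunct2, THEN conjunct2, THEN conjunct1] Ball[THEN conjunct2, THEN conjunct2, THEN conjunct2, THEN conjunct2, THEN conjunct2, THEN conjunct1] Ball[THEN conjunct2, THEN conjunct2, THEN conjunct2, THEN conjunct2, THEN conjunct2, THEN conjunct2, THEN conjunct1] Ball[THEN conjunct2, THEN conjunct2, THEN conjunct2, THEN conjunct2, THEN conjunct2, THEN conjunct2, THEN conjunct2, THEN conjunct1]
    obtain r where r: "r ^ l = la" using root_exist[OF ac, of l la] l1 by auto
    obtain q where q: "q ^ l = mu" using root_exist[OF ac, of l mu] l1 by auto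
    have l0: "l > 0" using l1 by simp
    have "la \<noteq> 0" "mu \<noteq> 0" using B(2) M(1) by auto
    then have r0: "r \<noteq> 0" and q0: "q \<noteq> 0" using r q l0 by auto
    have zr: "(z*r) ^ l = la" using z r by (simp add: power_mult_distrib)
    define Y1 where "Y1 = lincomb ((r-q)/(la-mu)) ((q*la - r*mu)/(la-mu)) M"
    define Y2 where "Y2 = lincomb ((z*r-q)/(la-mu)) ((q*la - (z*r)*mu)/(la-mu)) M"
    have E1a: "mpow Y1 l = M \<and> mv Y1 v1 = (r * fst v1, r * snd v1) \<and> mv Y1 v2 = (q * fst v2, q * snd v2) \<and> mdet Y1 \<noteq> 0"
      unfolding Y1_def by (rule eig_root[OF B(1,2) M(1) B(3,4,7,5,6) r q l0])
    have E2a: "mpow Y2 l = M \<and> mv Y2 v1 = ((z*r) * fst v1, (z*r) * snd v1) \<and> mv Y2 v2 = (q * fst v2, q * snd v2) \<and> mdet Y2 \<noteq> 0"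
      unfolding Y2_def by (rule eig_root[OF B(1,2) M(1) B(3,4,7,5,6) zr q l0])
    note E1 = E1a[THEN conjunct1] E1a[THEN conjunct2, THEN conjunct1] E1a[THEN conjunct2, THEN conjunct2, THEN conjunct1] E1a[THEN conjunct2, THEN conjunct2, THEN conjunct2]
    note E2 = E2a[THEN conjunct1] E2a[THEN conjunct2, THEN conjunct1] E2a[THEN conjunct2, THEN conjunct2, THEN conjunct1] E2a[THEN conjunct2, THEN conjunct2, THEN conjunct2]
    have c1: "mobius Y1 \<in> carrier GG" unfolding carrier_iff using E1(4) by blast
    have c2: "mobius Y2 \<in> carrier GG" unfolding carrier_iff using E2(4) by blast
    have p1: "mobius Y1 [^]\<^bsub>GG\<^esub> l = f" using mobius_pow[OF E1(4)] E1(1) M by simp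
    have p2: "mobius Y2 [^]\<^bsub>GG\<^esub> l = f" using mobius_pow[OF E2(4)] E2(1) M by simp
    have ne: "mobius Y1 \<noteq> mobius Y2"
    proof
      assume "mobius Y1 = mobius Y2"
      then obtain t where t: "Y2 = msc t Y1" using mobius_inj[OF E1(4) E2(4)] by blast
      have e1: "mv Y2 v1 = ((t*r) * fst v1, (t*r) * snd v1)" using t E1(2) by (simp add: mv_msc mult.assoc)
      have "((z*r) * fst v1, (z*r) * snd v1) = ((t*r) * fst v1, (t*r) * snd v1)"
        using E2(2)[symmetric] e1 by (rule trans)
      then have "z*r = t*r" by (rule vec_scal_eq[OF B(3)])
      then have "z = t" using r0 by simp
      have e2: "mv Y2 v2 = ((t*q) * fst v2, (t*q) * snd v2)" using t E1(3) by (simp add: mv_msc mult.assoc)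
      have "(q * fst v2, q * snd v2) = ((t*q) * fst v2, (t*q) * snd v2)"
        using E2(3)[symmetric] e2 by (rule trans)
      then have "q = t*q" by (rule vec_scal_eq[OF B(4)])
      then have "t = 1" using q0 by simp
      then show False using z \<open>z = t\<close> by simp
    qed
    show ?thesis using not_ud[OF ne c1 c2 p1 p2] .
  qed
qed

theorem mainTheorem14:
  fixes l :: nat
  assumes "alg_closed TYPE('k::field)"
    and "prime l" and "l \<noteq> CHAR('k)"
  shows "(\<forall>f \<in> carrier (Aut_P1 :: (('k \<times> 'k) set \<Rightarrow> ('k \<times> 'k) set) monoid).
            parabolic f \<longleftrightarrow> uniquely_divisible (Aut_P1 :: (('k \<times> 'k) set \<Rightarrow> ('k \<times> 'k) set) monoid) l f)
       \<and> (\<forall>H. subgroup H (Aut_P1 :: (('k \<times> 'k) set \<Rightarrow> ('k \<times> 'k) set) monoid) \<longrightarrow>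
            ((\<exists>P \<in> P1. H = stabilizer (Aut_P1 :: (('k \<times> 'k) set \<Rightarrow> ('k \<times> 'k) set) monoid) (\<lambda>g. g) P)
             \<longleftrightarrow> (\<exists>f. parabolic f \<and>
                   H = normalizer (Aut_P1 :: (('k \<times> 'k) set \<Rightarrow> ('k \<times> 'k) set) monoid)
                         (centralizer (Aut_P1 :: (('k \<times> 'k) set \<Rightarrow> ('k \<times> 'k) set) monoid) {f}))))"
proof -
  have nz: "(of_nat l :: 'k) \<noteq> 0" using ofnat_l assms(2,3) by blast
  have A: "\<forall>f \<in> carrier (Aut_P1 :: (('k \<times> 'k) set \<Rightarrow> ('k \<times> 'k) set) monoid).
            parabolic f \<longleftrightarrow> uniquely_divisible (Aut_P1 :: (('k \<times> 'k) set \<Rightarrow> ('k \<times> 'k) set) monoid) l f"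
  proof
    fix f :: "('k \<times> 'k) set \<Rightarrow> ('k \<times> 'k) set"
    assume fc: "f \<in> carrier Aut_P1"
    show "parabolic f \<longleftrightarrow> uniquely_divisible (Aut_P1 :: (('k \<times> 'k) set \<Rightarrow> ('k \<times> 'k) set) monoid) l f"
    proof
      assume "parabolic f" then show "uniquely_divisible Aut_P1 l f" by (rule part_a_fwd[OF assms(1) nz])
    next
      assume u: "uniquely_divisible (Aut_P1 :: (('k \<times> 'k) set \<Rightarrow> ('k \<times> 'k) set) monoid) l f"
      show "parabolic f"
      proof (rule ccontr)
        assume "\<not> parabolic f"
        from part_a_bwd[OF assms(1,2) nz fc this] u show False by simp
      qed
    qed
  qed
  have B: "\<forall>H. subgroup H (Aut_P1 :: (('k \<times> 'k) set \<Rightarrow> ('k \<times> 'k) set) monoid) \<longrightarrow>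
            ((\<exists>P \<in> P1. H = stabilizer (Aut_P1 :: (('k \<times> 'k) set \<Rightarrow> ('k \<times> 'k) set) monoid) (\<lambda>g. g) P)
             \<longleftrightarrow> (\<exists>f. parabolic f \<and>
                   H = normalizer (Aut_P1 :: (('k \<times> 'k) set \<Rightarrow> ('k \<times> 'k) set) monoid)
                         (centralizer (Aut_P1 :: (('k \<times> 'k) set \<Rightarrow> ('k \<times> 'k) set) monoid) {f})))"
  proof (intro allI impI)
    fix H show "(\<exists>P \<in> P1. H = stabilizer (Aut_P1 :: (('k \<times> 'k) set \<Rightarrow> ('k \<times> 'k) set) monoid) (\<lambda>g. g) P)
             \<longleftrightarrow> (\<exists>f. parabolic f \<and>
                   H = normalizer (Aut_P1 :: (('k \<times> 'k) set \<Rightarrow> ('k \<times> 'k) set) monoid)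
                         (centralizer (Aut_P1 :: (('k \<times> 'k) set \<Rightarrow> ('k \<times> 'k) set) monoid) {f}))"
      by (rule part_b[OF assms(1)])
  qed
  show ?thesis using A B by (rule conjI)
qed


end
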